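(* Let $u\le v$ in $S_n$, let $I$ be a strong hypercube decomposition of $[u,v]$ with hypercube maps $\theta_x$, and let $\prec$ be a reflection order satisfying (E1) relative to $I$. Then every increasing path from $u$ to $v$ in the Bruhat graph ends with a sequence of the form $$\cdots\to x\to\theta_x(\{y_1\})\to\theta_x(\{y_1,y_2\})\to\cdots\to\theta_x(\{y_1,\dots,y_k\})$$ for some $x\in I$ and some $\{y_1,\dots,y_k\}\in\mathcal{A}_x$.
   Context: $S_n$ is the symmetric group with simple reflections $s_i=(i\ i{+}1)$, length $\ell$, and $T$ the set of transpositions. The Bruhat graph $\Gamma$ has vertex set $S_n$ and edges $w\xrightarrow{t}tw$ labelled $t$ whenever $t\in T$, $\ell(w)<\ell(tw)$; Bruhat order is reachability; $\Gamma(u,v)$ is the induced subgraph on $[u,v]$. A path is increasing if its edge labels are strictly increasing under $\prec$. A diamond is a subgraph of $\Gamma$ with four distinct vertices $x_1,\dots,x_4$ and edges $x_1\to x_2\to x_4$, $x_1\to x_3\to x_4$; $X\subset[u,v]$ is diamond-closed in $[u,v]$ if it contains the fourth vertex of any diamond in $[u,v]$ of which it contains three vertices. A reflection order is a total order $\prec$ on $T$ with, for all $a<b<c$, either $(a\,b)\prec(a\,c)\prec(b\,c)$ or $(b\,c)\prec(a\,c)\prec(a\,b)$. For an order ideal $I\subset[u,v]$ and $x\in I$, $\mathcal{Y}_x=\{y\in[u,v]\setminus I: x\to y\}$ and $\mathcal{A}_x$ is the set of Bruhat antichains contained in $\mathcal{Y}_x$, with $Y_1\to Y_2$ iff $Y_1\subset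 Y_2$, $|Y_2\setminus Y_1|=1$. A strong hypercube cluster at $x$ is a map $\theta_x:\mathcal{A}_x\to[u,v]$ with (HC1) $\theta_x(\varnothing)=x$; (HC2) $\theta_x(\{y\})=y$; (HC3) $Y_1\to Y_2$ implies $\theta_x(Y_1)\to\theta_x(Y_2)$ in $\Gamma$; (HC4) if $|Y|=|Y'|=|Y\cap Y'|+1$ and $\theta_x(Y\cap Y'),\theta_x(Y),\theta_x(Y'),w$ form a diamond in $\Gamma(u,v)$ with top $w$, then $Y\cup Y'$ is an antichain and $\theta_x(Y\cup Y')=w$. A strong hypercube decomposition of $[u,v]$ is an order ideal $I=[u,z]$ ($z\in[u,v]$) that is diamond-closed in $[u,v]$ and such that every $x\in I$ has a strong hypercube cluster relative to $I$. Condition (E1) relative to $I$: for each $x\in I$, if $x\xrightarrow{t_1}y_1$ and $x\xrightarrow{t_2}y_2$ with $y_1\in I$ and $y_2\in[u,v]\setminus I$, then $t_1\prec t_2$. *)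

theory Defs
  imports "HOL-Combinatorics.Permutations" "HOL-Combinatorics.Transposition"
begin

text \<open>Elements of S_n are permutations of {1..n} (functions nat => nat fixing
everything outside {1..n}). Products act as composition: (t w)(i) = t (w i).\<close>

definition Sn :: "nat \<Rightarrow> (nat \<Rightarrow> nat) set" where
  "Sn n = {p. p permutes {1..n}}"

definition len :: "nat \<Rightarrow> (nat \<Rightarrow> nat) \<Rightarrow> nat" where
  "len n w = card {(i, j). 1 \<le> i \<and> i < j \<and> j \<le> n \<and> w i > w j}"

text \<open>The set T of transpositions, (a b) encoded as the pair (a,b) with a < b.\<close>
definition Trans :: "nat \<Rightarrow> (nat \<times> nat) set" where
  "Trans n = {(a, b). 1 \<le> a \<and> a < b \<and> b \<le> n}"

definition refl_perm :: "nat \<times> nat \<Rightarrow> nat \<Rightarrow> nat" where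
  "refl_perm t = transpose (fst t) (snd t)"

definition bedge :: "nat \<Rightarrow> (nat \<Rightarrow> nat) \<Rightarrow> nat \<times> nat \<Rightarrow> (nat \<Rightarrow> nat) \<Rightarrow> bool" where
  "bedge n w t w' \<longleftrightarrow> w \<in> Sn n \<and> t \<in> Trans n \<and> w' = refl_perm t \<circ> w \<and> len n w < len n w'"

definition barrow :: "nat \<Rightarrow> (nat \<Rightarrow> nat) \<Rightarrow> (nat \<Rightarrow> nat) \<Rightarrow> bool" where
  "barrow n w w' \<longleftrightarrow> (\<exists>t. bedge n w t w')"

definition bruhat_le :: "nat \<Rightarrow> (nat \<Rightarrow> nat) \<Rightarrow> (nat \<Rightarrow> nat) \<Rightarrow> bool" where
  "bruhat_le n u w \<longleftrightarrow> u \<in> Sn n \<and> (barrow n)\<^sup>*\<^sup>* u w"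

definition bint :: "nat \<Rightarrow> (nat \<Rightarrow> nat) \<Rightarrow> (nat \<Rightarrow> nat) \<Rightarrow> (nat \<Rightarrow> nat) set" where
  "bint n u v = {w. bruhat_le n u w \<and> bruhat_le n w v}"

definition is_diamond :: "nat \<Rightarrow> (nat \<Rightarrow> nat) \<Rightarrow> (nat \<Rightarrow> nat) \<Rightarrow> (nat \<Rightarrow> nat) \<Rightarrow> (nat \<Rightarrow> nat) \<Rightarrow> bool" where
  "is_diamond n x1 x2 x3 x4 \<longleftrightarrow> distinct [x1, x2, x3, x4] \<and>
     barrow n x1 x2 \<and> barrow n x2 x4 \<and> barrow n x1 x3 \<and> barrow n x3 x4"

definition diamond_in :: "nat \<Rightarrow> (nat \<Rightarrow> nat) \<Rightarrow> (nat \<Rightarrow> nat) \<Rightarrow> (nat \<Rightarrow> nat) \<Rightarrow> (nat \<Rightarrow> nat) \<Rightarrow> (nat \<Rightarrow> nat) \<Rightarrow> (nat \<Rightarrow> nat) \<Rightarrow> bool" where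
  "diamond_in n u v x1 x2 x3 x4 \<longleftrightarrow> is_diamond n x1 x2 x3 x4 \<and> {x1, x2, x3, x4} \<subseteq> bint n u v"

definition diamond_closed :: "nat \<Rightarrow> (nat \<Rightarrow> nat) \<Rightarrow> (nat \<Rightarrow> nat) \<Rightarrow> (nat \<Rightarrow> nat) set \<Rightarrow> bool" where
  "diamond_closed n u v X \<longleftrightarrow> X \<subseteq> bint n u v \<and>
     (\<forall>x1 x2 x3 x4. diamond_in n u v x1 x2 x3 x4 \<longrightarrow> card ({x1, x2, x3, x4} \<inter> X) \<ge> 3
        \<longrightarrow> {x1, x2, x3, x4} \<subseteq> X)"

definition Yx :: "nat \<Rightarrow> (nat \<Rightarrow> nat) \<Rightarrow> (nat \<Rightarrow> nat) \<Rightarrow> (nat \<Rightarrow> nat) set \<Rightarrow> (nat \<Rightarrow> nat) \<Rightarrow> (nat \<Rightarrow> nat) set" where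
  "Yx n u v I x = {y \<in> bint n u v - I. barrow n x y}"

definition bantichain :: "nat \<Rightarrow> (nat \<Rightarrow> nat) set \<Rightarrow> bool" where
  "bantichain n A \<longleftrightarrow> (\<forall>a\<in>A. \<forall>b\<in>A. bruhat_le n a b \<longrightarrow> a = b)"

definition Ax :: "nat \<Rightarrow> (nat \<Rightarrow> nat) \<Rightarrow> (nat \<Rightarrow> nat) \<Rightarrow> (nat \<Rightarrow> nat) set \<Rightarrow> (nat \<Rightarrow> nat) \<Rightarrow> (nat \<Rightarrow> nat) set set" where
  "Ax n u v I x = {Y. Y \<subseteq> Yx n u v I x \<and> bantichain n Y}"

definition acover :: "'a set \<Rightarrow> 'a set \<Rightarrow> bool" where
  "acover Y1 Y2 \<longleftrightarrow> Y1 \<subseteq> Y2 \<and> card (Y2 - Y1) = 1"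

definition strong_hc_cluster :: "nat \<Rightarrow> (nat \<Rightarrow> nat) \<Rightarrow> (nat \<Rightarrow> nat) \<Rightarrow> (nat \<Rightarrow> nat) set \<Rightarrow> (nat \<Rightarrow> nat)
    \<Rightarrow> ((nat \<Rightarrow> nat) set \<Rightarrow> (nat \<Rightarrow> nat)) \<Rightarrow> bool" where
  "strong_hc_cluster n u v I x \<theta> \<longleftrightarrow>
     (\<forall>Y \<in> Ax n u v I x. \<theta> Y \<in> bint n u v) \<and>
     \<theta> {} = x \<and>
     (\<forall>y. {y} \<in> Ax n u v I x \<longrightarrow> \<theta> {y} = y) \<and>
     (\<forall>Y1 \<in> Ax n u v I x. \<forall>Y2 \<in> Ax n u v I x. acover Y1 Y2 \<longrightarrow> barrow n (\<theta> Y1) (\<theta> Y2)) \<and>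
     (\<forall>Y \<in> Ax n u v I x. \<forall>Y' \<in> Ax n u v I x. \<forall>w.
        card Y = card Y' \<and> card Y = card (Y \<inter> Y') + 1 \<and>
        diamond_in n u v (\<theta> (Y \<inter> Y')) (\<theta> Y) (\<theta> Y') w \<longrightarrow>
        bantichain n (Y \<union> Y') \<and> \<theta> (Y \<union> Y') = w)"

definition strong_hc_decomp :: "nat \<Rightarrow> (nat \<Rightarrow> nat) \<Rightarrow> (nat \<Rightarrow> nat) \<Rightarrow> (nat \<Rightarrow> nat) set
    \<Rightarrow> ((nat \<Rightarrow> nat) \<Rightarrow> (nat \<Rightarrow> nat) set \<Rightarrow> (nat \<Rightarrow> nat)) \<Rightarrow> bool" where
  "strong_hc_decomp n u v I \<theta> \<longleftrightarrow>
     (\<exists>z \<in> bint n u v. I = bint n u z) \<and> diamond_closed n u v I \<and>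
     (\<forall>x \<in> I. strong_hc_cluster n u v I x (\<theta> x))"

definition reflection_order :: "nat \<Rightarrow> (nat \<times> nat \<Rightarrow> nat \<times> nat \<Rightarrow> bool) \<Rightarrow> bool" where
  "reflection_order n prec \<longleftrightarrow>
     (\<forall>t \<in> Trans n. \<not> prec t t) \<and>
     (\<forall>s \<in> Trans n. \<forall>t \<in> Trans n. \<forall>r \<in> Trans n. prec s t \<longrightarrow> prec t r \<longrightarrow> prec s r) \<and>
     (\<forall>s \<in> Trans n. \<forall>t \<in> Trans n. s \<noteq> t \<longrightarrow> prec s t \<or> prec t s) \<and>
     (\<forall>a b c. 1 \<le> a \<and> a < b \<and> b < c \<and> c \<le> n \<longrightarrow>
        (prec (a, b) (a, c) \<and> prec (a, c) (b, c)) \<or> (prec (b, c) (a, c) \<and> prec (a, c) (a, b)))"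

definition E1 :: "nat \<Rightarrow> (nat \<Rightarrow> nat) \<Rightarrow> (nat \<Rightarrow> nat) \<Rightarrow> (nat \<Rightarrow> nat) set \<Rightarrow> (nat \<times> nat \<Rightarrow> nat \<times> nat \<Rightarrow> bool) \<Rightarrow> bool" where
  "E1 n u v I prec \<longleftrightarrow>
     (\<forall>x \<in> I. \<forall>t1 y1 t2 y2. bedge n x t1 y1 \<and> bedge n x t2 y2 \<and> y1 \<in> I \<and> y2 \<in> bint n u v - I
        \<longrightarrow> prec t1 t2)"

definition increasing_path :: "nat \<Rightarrow> (nat \<times> nat \<Rightarrow> nat \<times> nat \<Rightarrow> bool) \<Rightarrow> (nat \<Rightarrow> nat) \<Rightarrow> (nat \<Rightarrow> nat)
    \<Rightarrow> (nat \<Rightarrow> nat) list \<Rightarrow> (nat \<times> nat) list \<Rightarrow> bool" where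
  "increasing_path n prec u v xs ts \<longleftrightarrow>
     xs \<noteq> [] \<and> hd xs = u \<and> last xs = v \<and> length xs = length ts + 1 \<and>
     (\<forall>i < length ts. bedge n (xs ! i) (ts ! i) (xs ! Suc i)) \<and>
     sorted_wrt prec ts"

end

theory Submission
  imports Defs
begin


definition Inv :: "nat \<Rightarrow> (nat \<Rightarrow> nat) \<Rightarrow> (nat \<times> nat) set" where
  "Inv n w = {(i, j). 1 \<le> i \<and> i < j \<and> j \<le> n \<and> w i > w j}"

lemma len_Inv: "len n w = card (Inv n w)"
  unfolding len_def Inv_def by simp

lemma finite_Inv: "finite (Inv n w)"
  by (rule finite_subset[of _ "{1..n} \<times> {1..n}"]) (auto simp: Inv_def)

lemma len_swap_less:
  assumes "i0 < j0" "1 \<le> i0" "j0 \<le> n" "w i0 < w j0"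
  shows "len n w < len n (w \<circ> transpose i0 j0)"
proof -
  define s where "s = transpose i0 j0"
  define \<phi> where "\<phi> = (\<lambda>(i::nat, j::nat). if s i < s j then (s i, s j) else (i, j))"
  have sub: "\<phi> ` Inv n w \<subseteq> Inv n (w \<circ> s) - {(i0, j0)}"
  proof
    fix p assume "p \<in> \<phi> ` Inv n w"
    then obtain i j where ij: "(i, j) \<in> Inv n w" "p = \<phi> (i, j)" by auto
    then have h: "1 \<le> i" "i < j" "j \<le> n" "w i > w j" by (auto simp: Inv_def)
    show "p \<in> Inv n (w \<circ> s) - {(i0, j0)}"
      using h assms ij(2) unfolding \<phi>_def s_def Inv_def
      by (auto simp: transpose_def split: if_splits)
  qed
  have inj: "inj_on \<phi> (Inv n w)"
  proof (rule inj_onI)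
    fix p q assume p: "p \<in> Inv n w" and q: "q \<in> Inv n w" and e: "\<phi> p = \<phi> q"
    obtain i j where [simp]: "p = (i, j)" by (cases p)
    obtain k l where [simp]: "q = (k, l)" by (cases q)
    show "p = q"
      using e p q assms unfolding \<phi>_def s_def Inv_def
      by (auto simp: transpose_def split: if_splits)
  qed
  have mem: "(i0, j0) \<in> Inv n (w \<circ> s)"
    using assms by (auto simp: Inv_def s_def)
  have "card (Inv n w) = card (\<phi> ` Inv n w)" using inj by (simp add: card_image)
  also have "\<dots> \<le> card (Inv n (w \<circ> s) - {(i0, j0)})"
    by (rule card_mono) (use sub finite_Inv in auto)
  also have "\<dots> < card (Inv n (w \<circ> s))"
    by (rule card_Diff1_less[OF finite_Inv mem])
  finally show ?thesis by (simp add: len_Inv s_def)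
qed

lemma Sn_bij: "x \<in> Sn n \<Longrightarrow> bij x"
  unfolding Sn_def by (simp add: permutes_bij)

lemma Sn_swap: "x \<in> Sn n \<Longrightarrow> (a, b) \<in> Trans n \<Longrightarrow> transpose a b \<circ> x \<in> Sn n"
proof -
  assume x: "x \<in> Sn n" and ab: "(a, b) \<in> Trans n"
  have "transpose a b permutes {1..n}" using ab unfolding Trans_def by (intro permutes_swap_id) auto
  then show ?thesis using x unfolding Sn_def by (simp add: permutes_compose)
qed

lemma Sn_inv_range: "x \<in> Sn n \<Longrightarrow> a \<in> {1..n} \<Longrightarrow> inv x a \<in> {1..n}"
proof -
  assume x: "x \<in> Sn n" and a: "a \<in> {1..n}"
  have p: "inv x permutes {1..n}" using x unfolding Sn_def by (simp add: permutes_inv)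
  have "inv x a \<in> {1..n} \<longleftrightarrow> a \<in> {1..n}" by (rule permutes_in_image[OF p])
  then show ?thesis using a by (simp only:)
qed

lemma len_swap_iff:
  assumes x: "x \<in> Sn n" and ab: "(a, b) \<in> Trans n"
  shows "len n x < len n (transpose a b \<circ> x) \<longleftrightarrow> inv x a < inv x b"
proof -
  have ab': "1 \<le> a" "a < b" "b \<le> n" using ab by (auto simp: Trans_def)
  have bx: "bij x" using Sn_bij[OF x] .
  have xp: "x permutes {1..n}" using x by (simp add: Sn_def)
  have ia: "inv x a \<in> {1..n}" "inv x b \<in> {1..n}" using Sn_inv_range[OF x] ab' by auto
  have xa: "x (inv x a) = a" "x (inv x b) = b" using permutes_inverses(1)[OF xp] by auto
  have ne: "inv x a \<noteq> inv x b"
  proof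
    assume "inv x a = inv x b"
    then have "x (inv x a) = x (inv x b)" by (rule arg_cong)
    then have "a = b" by (simp only: xa)
    then show False using ab' by simp
  qed
  have eq: "transpose a b \<circ> x = x \<circ> transpose (inv x a) (inv x b)"
    by (rule transpose_comp_eq[OF bx])
  show ?thesis
  proof
    assume "len n x < len n (transpose a b \<circ> x)"
    show "inv x a < inv x b"
    proof (rule ccontr)
      assume "\<not> inv x a < inv x b"
      then have lt: "inv x b < inv x a" using ne by simp
      define w where "w = transpose a b \<circ> x"
      have "len n w < len n (w \<circ> transpose (inv x b) (inv x a))"
        by (rule len_swap_less) (use lt ia xa ab' in \<open>auto simp: w_def\<close>)
      moreover have "w \<circ> transpose (inv x b) (inv x a) = x"
      proof -
        have c: "transpose (inv x b) (inv x a) = transpose (inv x a) (inv x b)" by (rule transpose_commute)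
        show ?thesis unfolding w_def eq c by (simp add: comp_assoc)
      qed
      moreover have "len n x < len n w" using \<open>len n x < len n (transpose a b \<circ> x)\<close> by (simp only: w_def)
      ultimately show False by simp
    qed
  next
    assume lt: "inv x a < inv x b"
    have "len n x < len n (x \<circ> transpose (inv x a) (inv x b))"
      by (rule len_swap_less) (use lt ia xa ab' in auto)
    then show "len n x < len n (transpose a b \<circ> x)" by (simp only: eq)
  qed
qed

lemma inv_swap_comp:
  assumes "x \<in> Sn n" shows "inv (transpose a b \<circ> x) = inv x \<circ> transpose a b"
  using Sn_bij[OF assms] by (simp add: o_inv_distrib)

lemma bedge_iff:
  "bedge n x t y \<longleftrightarrow> x \<in> Sn n \<and> t \<in> Trans n \<and> y = transpose (fst t) (snd t) \<circ> x \<and>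
     inv x (fst t) < inv x (snd t)"
proof (cases t)
  case (Pair a b)
  show ?thesis
  proof
    assume h: "bedge n x t y"
    then have "x \<in> Sn n" "(a, b) \<in> Trans n" "y = transpose a b \<circ> x" "len n x < len n y"
      using h unfolding bedge_def refl_perm_def Pair fst_conv snd_conv by blast+
    then show "x \<in> Sn n \<and> t \<in> Trans n \<and> y = transpose (fst t) (snd t) \<circ> x \<and>
     inv x (fst t) < inv x (snd t)" using len_swap_iff[of x n a b] by (simp add: Pair)
  next
    assume h: "x \<in> Sn n \<and> t \<in> Trans n \<and> y = transpose (fst t) (snd t) \<circ> x \<and>
     inv x (fst t) < inv x (snd t)"
    then have "x \<in> Sn n" "(a, b) \<in> Trans n" "y = transpose a b \<circ> x" "inv x a < inv x b"
      by (simp_all add: Pair)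
    then show "bedge n x t y" using len_swap_iff[of x n a b]
      by (simp add: bedge_def refl_perm_def Pair)
  qed
qed



lemma bex2I: "G c d \<Longrightarrow> c \<in> S \<Longrightarrow> d \<in> S \<Longrightarrow> \<exists>t3\<in>S. \<exists>t4\<in>S. G t3 t4"
  by blast

lemma tri:
  fixes P :: "nat \<Rightarrow> nat" and \<alpha> \<beta> \<gamma> :: nat
  assumes lt: "\<alpha> < \<beta>" "\<beta> < \<gamma>" and inj: "P \<alpha> \<noteq> P \<beta>" "P \<alpha> \<noteq> P \<gamma>" "P \<beta> \<noteq> P \<gamma>"
    and t1: "t1 \<in> {(\<alpha>,\<beta>),(\<alpha>,\<gamma>),(\<beta>,\<gamma>)}" and t2: "t2 \<in> {(\<alpha>,\<beta>),(\<alpha>,\<gamma>),(\<beta>,\<gamma>)}"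
    and e1: "P (fst t1) < P (snd t1)"
    and e2: "P (refl_perm t1 (fst t2)) < P (refl_perm t1 (snd t2))"
    and p12: "pr t1 t2"
    and irr: "\<And>t. t \<in> {(\<alpha>,\<beta>),(\<alpha>,\<gamma>),(\<beta>,\<gamma>)} \<Longrightarrow> \<not> pr t t"
    and asy: "\<And>s t. s \<in> {(\<alpha>,\<beta>),(\<alpha>,\<gamma>),(\<beta>,\<gamma>)} \<Longrightarrow> t \<in> {(\<alpha>,\<beta>),(\<alpha>,\<gamma>),(\<beta>,\<gamma>)} \<Longrightarrow> pr s t \<Longrightarrow> \<not> pr t s"
    and ord: "(pr (\<alpha>,\<beta>) (\<alpha>,\<gamma>) \<and> pr (\<alpha>,\<gamma>) (\<beta>,\<gamma>) \<and> pr (\<alpha>,\<beta>) (\<beta>,\<gamma>)) \<or>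
              (pr (\<beta>,\<gamma>) (\<alpha>,\<gamma>) \<and> pr (\<alpha>,\<gamma>) (\<alpha>,\<beta>) \<and> pr (\<beta>,\<gamma>) (\<alpha>,\<beta>))"
  shows "\<exists>t3\<in>{(\<alpha>,\<beta>),(\<alpha>,\<gamma>),(\<beta>,\<gamma>)}. \<exists>t4\<in>{(\<alpha>,\<beta>),(\<alpha>,\<gamma>),(\<beta>,\<gamma>)}.
     P (fst t3) < P (snd t3) \<and> P (refl_perm t3 (fst t4)) < P (refl_perm t3 (snd t4)) \<and>
     (\<forall>v\<in>{\<alpha>,\<beta>,\<gamma>}. refl_perm t4 (refl_perm t3 v) = refl_perm t2 (refl_perm t1 v)) \<and> pr t1 t3"
proof -
  have d: "\<alpha> \<noteq> \<beta>" "\<alpha> \<noteq> \<gamma>" "\<beta> \<noteq> \<gamma>" "\<beta> \<noteq> \<alpha>" "\<gamma> \<noteq> \<alpha>" "\<gamma> \<noteq> \<beta>" using lt by auto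
  define A where "A = (\<alpha>,\<beta>)"
  define B where "B = (\<alpha>,\<gamma>)"
  define C where "C = (\<beta>,\<gamma>)"
  have mem: "A \<in> {(\<alpha>,\<beta>),(\<alpha>,\<gamma>),(\<beta>,\<gamma>)}" "B \<in> {(\<alpha>,\<beta>),(\<alpha>,\<gamma>),(\<beta>,\<gamma>)}" "C \<in> {(\<alpha>,\<beta>),(\<alpha>,\<gamma>),(\<beta>,\<gamma>)}"
    by (auto simp: A_def B_def C_def)
  have nA: "\<not> pr A A" "\<not> pr B B" "\<not> pr C C" using irr mem by auto
  have as: "pr A B \<Longrightarrow> \<not> pr B A" "pr A C \<Longrightarrow> \<not> pr C A" "pr B C \<Longrightarrow> \<not> pr C B" using asy mem by auto
  have ord': "(pr A B \<and> pr B C \<and> pr A C) \<or> (pr C B \<and> pr B A \<and> pr C A)"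
    using ord by (simp add: A_def B_def C_def)
  have tt: "t1 = A \<or> t1 = B \<or> t1 = C" "t2 = A \<or> t2 = B \<or> t2 = C" using t1 t2 by (auto simp: A_def B_def C_def)
  have rA: "\<And>v. refl_perm A v = transpose \<alpha> \<beta> v" and rB: "\<And>v. refl_perm B v = transpose \<alpha> \<gamma> v"
    and rC: "\<And>v. refl_perm C v = transpose \<beta> \<gamma> v"
    by (simp_all add: refl_perm_def A_def B_def C_def)
  have fA: "fst A = \<alpha>" "snd A = \<beta>" "fst B = \<alpha>" "snd B = \<gamma>" "fst C = \<beta>" "snd C = \<gamma>"
    by (simp_all add: A_def B_def C_def)
  note simps = rA rB rC fA transpose_def d
  show ?thesis
  proof -
    { assume h: "t1 = A" "t2 = B"
      have o: "pr A B \<and> pr B C \<and> pr A C" using ord' as p12 h by blast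
      have ?thesis
        by (rule bex2I[of _ C A]) (use h o e1 e2 mem in \<open>auto simp: simps\<close>) }
    moreover
    { assume h: "t1 = A" "t2 = C"
      have o: "pr A B \<and> pr B C \<and> pr A C" using ord' as p12 h by blast
      have ?thesis
      proof (cases "P \<beta> < P \<gamma>")
        case True
        then show ?thesis by (intro bex2I[of _ C B]) (use h o e1 e2 mem in \<open>auto simp: simps\<close>)
      next
        case False
        then show ?thesis by (intro bex2I[of _ B A]) (use h o e1 e2 mem inj in \<open>auto simp: simps\<close>)
      qed }
    moreover
    { assume h: "t1 = B" "t2 = C"
      have o: "pr A B \<and> pr B C \<and> pr A C" using ord' as p12 h by blast
      have ?thesis
        by (rule bex2I[of _ C A]) (use h o e1 e2 mem in \<open>auto simp: simps\<close>) }
    moreover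
    { assume h: "t1 = C" "t2 = A"
      have o: "pr C B \<and> pr B A \<and> pr C A" using ord' as p12 h by blast
      have ?thesis
      proof (cases "P \<alpha> < P \<beta>")
        case True
        then show ?thesis by (intro bex2I[of _ A B]) (use h o e1 e2 mem in \<open>auto simp: simps\<close>)
      next
        case False
        then show ?thesis by (intro bex2I[of _ B C]) (use h o e1 e2 mem inj in \<open>auto simp: simps\<close>)
      qed }
    moreover
    { assume h: "t1 = C" "t2 = B"
      have o: "pr C B \<and> pr B A \<and> pr C A" using ord' as p12 h by blast
      have ?thesis
        by (rule bex2I[of _ A C]) (use h o e1 e2 mem in \<open>auto simp: simps\<close>) }
    moreover
    { assume h: "t1 = B" "t2 = A"
      have o: "pr C B \<and> pr B A \<and> pr C A" using ord' as p12 h by blast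
      have ?thesis
        by (rule bex2I[of _ A C]) (use h o e1 e2 mem in \<open>auto simp: simps\<close>) }
    moreover
    { assume h: "t1 = t2"
      then have False using p12 nA tt by auto }
    ultimately show ?thesis using tt by blast
  qed
qed



lemma transpose_pair_inj:
  fixes e f a b :: nat
  assumes "e < f" "a < b" "transpose e f = transpose a b"
  shows "(e, f) = (a, b)"
proof -
  have "transpose e f e = transpose a b e" using assms(3) by simp
  then have 1: "f = transpose a b e" by simp
  have "transpose e f f = transpose a b f" using assms(3) by simp
  then have 2: "e = transpose a b f" by simp
  show ?thesis using 1 2 assms(1,2) by (auto simp: transpose_def split: if_splits)
qed

lemma finish:
  assumes RO: "reflection_order n prec" and x: "x \<in> Sn n"
    and t1: "t1 \<in> Trans n" and t3: "t3 \<in> Trans n" and t4: "t4 \<in> Trans n"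
    and e3: "inv x (fst t3) < inv x (snd t3)"
    and e4: "inv x (refl_perm t3 (fst t4)) < inv x (refl_perm t3 (snd t4))"
    and eq: "refl_perm t4 \<circ> refl_perm t3 = refl_perm t2 \<circ> refl_perm t1"
    and p: "prec t1 t3"
  shows "\<exists>t3 y'. bedge n x t3 y' \<and> barrow n y' (refl_perm t2 \<circ> (refl_perm t1 \<circ> x)) \<and>
            y' \<noteq> refl_perm t1 \<circ> x \<and> prec t1 t3"
proof -
  define y' where "y' = refl_perm t3 \<circ> x"
  have b1: "bedge n x t3 y'" unfolding bedge_iff y'_def refl_perm_def using x t3 e3 by simp
  have y'S: "y' \<in> Sn n" using Sn_swap[of x n "fst t3" "snd t3"] x t3 by (simp add: y'_def refl_perm_def)
  have iy: "inv y' = inv x \<circ> refl_perm t3" unfolding y'_def refl_perm_def by (rule inv_swap_comp[OF x])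
  have w: "refl_perm t2 \<circ> (refl_perm t1 \<circ> x) = refl_perm t4 \<circ> y'"
    unfolding y'_def by (metis comp_assoc eq)
  have b2: "bedge n y' t4 (refl_perm t2 \<circ> (refl_perm t1 \<circ> x))"
    unfolding bedge_iff w using y'S t4 e4 iy by (simp add: refl_perm_def)
  have ne: "y' \<noteq> refl_perm t1 \<circ> x"
  proof
    assume h: "y' = refl_perm t1 \<circ> x"
    have "refl_perm t3 = refl_perm t1"
    proof
      fix v
      have xv: "x (inv x v) = v" using x by (simp add: Sn_def permutes_inverses)
      have "(refl_perm t3 \<circ> x) (inv x v) = (refl_perm t1 \<circ> x) (inv x v)" using h y'_def by simp
      then show "refl_perm t3 v = refl_perm t1 v" using xv by simp
    qed
    then have "t3 = t1" using transpose_pair_inj[of "fst t3" "snd t3" "fst t1" "snd t1"] t1 t3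
      by (auto simp: refl_perm_def Trans_def)
    then show False using p RO t1 by (simp add: reflection_order_def)
  qed
  show ?thesis using b1 b2 ne p unfolding barrow_def by blast
qed


lemma T3_fix:
  assumes "t \<in> {(\<alpha>,\<beta>),(\<alpha>,\<gamma>),(\<beta>,\<gamma>)}" "v \<notin> {\<alpha>,\<beta>,\<gamma>}"
  shows "refl_perm t v = v"
  using assms by (auto simp: refl_perm_def)

lemma shared_triple:
  fixes a b c d :: nat
  assumes "(a,b) \<in> Trans n" "(c,d) \<in> Trans n" "(a,b) \<noteq> (c,d)"
    and "\<not> (c \<notin> {a,b} \<and> d \<notin> {a,b})"
  shows "\<exists>\<alpha> \<beta> \<gamma>. 1 \<le> \<alpha> \<and> \<alpha> < \<beta> \<and> \<beta> < \<gamma> \<and> \<gamma> \<le> n \<and>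
     (a,b) \<in> {(\<alpha>,\<beta>),(\<alpha>,\<gamma>),(\<beta>,\<gamma>)} \<and> (c,d) \<in> {(\<alpha>,\<beta>),(\<alpha>,\<gamma>),(\<beta>,\<gamma>)}"
proof -
  have h: "1 \<le> a" "a < b" "b \<le> n" "1 \<le> c" "c < d" "d \<le> n" using assms(1,2) by (auto simp: Trans_def)
  consider "c = a" "b < d" | "c = a" "d < b" | "d = a" | "c = b" | "d = b" "a < c" | "d = b" "c < a"
    using assms(3,4) h by fastforce
  then show ?thesis
  proof cases
    case 1 then show ?thesis using h by (intro exI[of _ a] exI[of _ b] exI[of _ d]) auto
  next
    case 2 then show ?thesis using h by (intro exI[of _ a] exI[of _ d] exI[of _ b]) auto
  next
    case 3 then show ?thesis using h by (intro exI[of _ c] exI[of _ a] exI[of _ b]) auto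
  next
    case 4 then show ?thesis using h by (intro exI[of _ a] exI[of _ b] exI[of _ d]) auto
  next
    case 5 then show ?thesis using h by (intro exI[of _ a] exI[of _ c] exI[of _ b]) auto
  next
    case 6 then show ?thesis using h by (intro exI[of _ c] exI[of _ a] exI[of _ b]) auto
  qed
qed

lemma claimC:
  assumes RO: "reflection_order n prec" and e1: "bedge n x t1 y" and e2: "bedge n y t2 w"
    and p: "prec t1 t2"
  shows "\<exists>t3 y'. bedge n x t3 y' \<and> barrow n y' w \<and> y' \<noteq> y \<and> prec t1 t3"
proof -
  obtain a b where t1d: "t1 = (a, b)" by (cases t1)
  obtain c d where t2d: "t2 = (c, d)" by (cases t2)
  have h1: "x \<in> Sn n \<and> t1 \<in> Trans n \<and> y = refl_perm t1 \<circ> x \<and> inv x (fst t1) < inv x (snd t1)"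
    using e1 unfolding bedge_iff refl_perm_def by blast
  have x: "x \<in> Sn n" and t1T: "t1 \<in> Trans n" and y: "y = refl_perm t1 \<circ> x"
    using h1 by blast+
  have i1: "inv x a < inv x b" using h1 by (simp only: t1d fst_conv snd_conv)
  have yS: "y \<in> Sn n" using y x Sn_swap[of x n a b] t1T by (simp add: refl_perm_def t1d)
  have h2: "y \<in> Sn n \<and> t2 \<in> Trans n \<and> w = refl_perm t2 \<circ> y \<and> inv y (fst t2) < inv y (snd t2)"
    using e2 unfolding bedge_iff refl_perm_def by blast
  have t2T: "t2 \<in> Trans n" and w: "w = refl_perm t2 \<circ> y"
    using h2 by blast+
  have i2: "inv y c < inv y d" using h2 by (simp only: t2d fst_conv snd_conv)
  have iy: "inv y = inv x \<circ> refl_perm t1" unfolding y refl_perm_def by (rule inv_swap_comp[OF x])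
  have i2': "inv x (refl_perm t1 c) < inv x (refl_perm t1 d)" using i2 iy by simp
  have injx: "inj (inv x)" using Sn_bij[OF x] by (simp add: bij_imp_bij_inv bij_is_inj)
  have irr: "\<And>t. t \<in> Trans n \<Longrightarrow> \<not> prec t t" using RO by (simp add: reflection_order_def)
  have trn: "\<And>r s t. r \<in> Trans n \<Longrightarrow> s \<in> Trans n \<Longrightarrow> t \<in> Trans n \<Longrightarrow> prec r s \<Longrightarrow> prec s t \<Longrightarrow> prec r t"
    using RO unfolding reflection_order_def by blast
  have asy: "\<And>s t. s \<in> Trans n \<Longrightarrow> t \<in> Trans n \<Longrightarrow> prec s t \<Longrightarrow> \<not> prec t s"
    using irr trn by blast
  have ne12: "t1 \<noteq> t2"
  proof
    assume "t1 = t2"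
    then show False using p irr[OF t1T] by simp
  qed
  have fin: "\<exists>t3 y'. bedge n x t3 y' \<and> barrow n y' (refl_perm t2 \<circ> (refl_perm t1 \<circ> x)) \<and>
            y' \<noteq> refl_perm t1 \<circ> x \<and> prec t1 t3"
    if "t3 \<in> Trans n" "t4 \<in> Trans n" "inv x (fst t3) < inv x (snd t3)"
      "inv x (refl_perm t3 (fst t4)) < inv x (refl_perm t3 (snd t4))"
      "refl_perm t4 \<circ> refl_perm t3 = refl_perm t2 \<circ> refl_perm t1" "prec t1 t3" for t3 t4
    by (rule finish[OF RO x t1T that])
  have goal: "\<exists>t3 y'. bedge n x t3 y' \<and> barrow n y' (refl_perm t2 \<circ> (refl_perm t1 \<circ> x)) \<and>
            y' \<noteq> refl_perm t1 \<circ> x \<and> prec t1 t3"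
  proof (cases "c \<notin> {a,b} \<and> d \<notin> {a,b}")
    case True
    show ?thesis
    proof (rule fin[of t2 t1])
      show "inv x (fst t2) < inv x (snd t2)" using i2' True by (simp add: t1d t2d refl_perm_def)
      show "inv x (refl_perm t2 (fst t1)) < inv x (refl_perm t2 (snd t1))"
        using i1 True by (auto simp: t1d t2d refl_perm_def transpose_def)
      show "refl_perm t1 \<circ> refl_perm t2 = refl_perm t2 \<circ> refl_perm t1"
        using True by (auto simp: t1d t2d refl_perm_def transpose_def fun_eq_iff)
    qed (use t1T t2T p in simp_all)
  next
    case False
    have "\<exists>\<alpha> \<beta> \<gamma>. 1 \<le> \<alpha> \<and> \<alpha> < \<beta> \<and> \<beta> < \<gamma> \<and> \<gamma> \<le> n \<and>
     (a,b) \<in> {(\<alpha>,\<beta>),(\<alpha>,\<gamma>),(\<beta>,\<gamma>)} \<and> (c,d) \<in> {(\<alpha>,\<beta>),(\<alpha>,\<gamma>),(\<beta>,\<gamma>)}"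
      by (rule shared_triple[of a b n c d]) (use t1T t2T ne12 False in \<open>simp_all add: t1d t2d\<close>)
    then obtain \<alpha> \<beta> \<gamma> where abc: "1 \<le> \<alpha>" "\<alpha> < \<beta>" "\<beta> < \<gamma>" "\<gamma> \<le> n"
      and m1': "(a,b) \<in> {(\<alpha>,\<beta>),(\<alpha>,\<gamma>),(\<beta>,\<gamma>)}" and m2': "(c,d) \<in> {(\<alpha>,\<beta>),(\<alpha>,\<gamma>),(\<beta>,\<gamma>)}"
      by blast
    have m1: "t1 \<in> {(\<alpha>,\<beta>),(\<alpha>,\<gamma>),(\<beta>,\<gamma>)}" using m1' by (simp only: t1d)
    have m2: "t2 \<in> {(\<alpha>,\<beta>),(\<alpha>,\<gamma>),(\<beta>,\<gamma>)}" using m2' by (simp only: t2d)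
    have sub: "{(\<alpha>,\<beta>),(\<alpha>,\<gamma>),(\<beta>,\<gamma>)} \<subseteq> Trans n" using abc by (auto simp: Trans_def)
    have ord0: "(prec (\<alpha>,\<beta>) (\<alpha>,\<gamma>) \<and> prec (\<alpha>,\<gamma>) (\<beta>,\<gamma>)) \<or> (prec (\<beta>,\<gamma>) (\<alpha>,\<gamma>) \<and> prec (\<alpha>,\<gamma>) (\<alpha>,\<beta>))"
      using RO abc unfolding reflection_order_def by blast
    have ord: "(prec (\<alpha>,\<beta>) (\<alpha>,\<gamma>) \<and> prec (\<alpha>,\<gamma>) (\<beta>,\<gamma>) \<and> prec (\<alpha>,\<beta>) (\<beta>,\<gamma>)) \<or>
              (prec (\<beta>,\<gamma>) (\<alpha>,\<gamma>) \<and> prec (\<alpha>,\<gamma>) (\<alpha>,\<beta>) \<and> prec (\<beta>,\<gamma>) (\<alpha>,\<beta>))"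
    proof -
      have s3: "(\<alpha>,\<beta>) \<in> Trans n" "(\<alpha>,\<gamma>) \<in> Trans n" "(\<beta>,\<gamma>) \<in> Trans n" using sub by auto
      show ?thesis
        using ord0 trn[OF s3(1) s3(2) s3(3)] trn[OF s3(3) s3(2) s3(1)] by blast
    qed
    have dP: "inv x \<alpha> \<noteq> inv x \<beta>" "inv x \<alpha> \<noteq> inv x \<gamma>" "inv x \<beta> \<noteq> inv x \<gamma>"
      using inj_eq[OF injx] abc by simp_all
    have ex: "\<exists>t3\<in>{(\<alpha>,\<beta>),(\<alpha>,\<gamma>),(\<beta>,\<gamma>)}. \<exists>t4\<in>{(\<alpha>,\<beta>),(\<alpha>,\<gamma>),(\<beta>,\<gamma>)}.
     inv x (fst t3) < inv x (snd t3) \<and> inv x (refl_perm t3 (fst t4)) < inv x (refl_perm t3 (snd t4)) \<and>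
     (\<forall>v\<in>{\<alpha>,\<beta>,\<gamma>}. refl_perm t4 (refl_perm t3 v) = refl_perm t2 (refl_perm t1 v)) \<and> prec t1 t3"
    proof (rule tri[where P="inv x" and pr=prec, OF abc(2,3) dP m1 m2])
      show "inv x (fst t1) < inv x (snd t1)" using i1 by (simp add: t1d)
      show "inv x (refl_perm t1 (fst t2)) < inv x (refl_perm t1 (snd t2))" using i2' by (simp add: t2d)
      show "prec t1 t2" by (rule p)
      show "\<And>t. t \<in> {(\<alpha>,\<beta>),(\<alpha>,\<gamma>),(\<beta>,\<gamma>)} \<Longrightarrow> \<not> prec t t" using irr sub by blast
      show "\<And>s t. s \<in> {(\<alpha>,\<beta>),(\<alpha>,\<gamma>),(\<beta>,\<gamma>)} \<Longrightarrow> t \<in> {(\<alpha>,\<beta>),(\<alpha>,\<gamma>),(\<beta>,\<gamma>)} \<Longrightarrow> prec s t \<Longrightarrow> \<not> prec t s"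
        using asy sub by blast
    qed (rule ord)
    then obtain t3 t4 where m3: "t3 \<in> {(\<alpha>,\<beta>),(\<alpha>,\<gamma>),(\<beta>,\<gamma>)}" and m4: "t4 \<in> {(\<alpha>,\<beta>),(\<alpha>,\<gamma>),(\<beta>,\<gamma>)}"
      and c3: "inv x (fst t3) < inv x (snd t3)"
      and c4: "inv x (refl_perm t3 (fst t4)) < inv x (refl_perm t3 (snd t4))"
      and cv: "\<forall>v\<in>{\<alpha>,\<beta>,\<gamma>}. refl_perm t4 (refl_perm t3 v) = refl_perm t2 (refl_perm t1 v)"
      and c13: "prec t1 t3"
      by blast
    have feq: "refl_perm t4 \<circ> refl_perm t3 = refl_perm t2 \<circ> refl_perm t1"
    proof
      fix v
      show "(refl_perm t4 \<circ> refl_perm t3) v = (refl_perm t2 \<circ> refl_perm t1) v"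
      proof (cases "v \<in> {\<alpha>,\<beta>,\<gamma>}")
        case True then show ?thesis using cv by (simp only: o_apply)
      next
        case False then show ?thesis using T3_fix m1 m2 m3 m4 by simp
      qed
    qed
    show ?thesis by (rule fin[OF _ _ c3 c4 feq c13]) (use m3 m4 sub in auto)
  qed
  then show ?thesis using y w by simp
qed



lemma barrow_len: "barrow n a b \<Longrightarrow> len n a < len n b"
  unfolding barrow_def bedge_def by auto

lemma bedge_barrow: "bedge n a t b \<Longrightarrow> barrow n a b"
  unfolding barrow_def by blast

lemma barrow_Sn: "barrow n a b \<Longrightarrow> a \<in> Sn n \<and> b \<in> Sn n"
proof -
  assume "barrow n a b"
  then obtain t where e: "bedge n a t b" unfolding barrow_def by blast
  then have "a \<in> Sn n" "t \<in> Trans n" "b = transpose (fst t) (snd t) \<circ> a"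
    unfolding bedge_def refl_perm_def by blast+
  then show ?thesis using Sn_swap[of a n "fst t" "snd t"] by simp
qed

lemma rtr_Sn: "(barrow n)\<^sup>*\<^sup>* a b \<Longrightarrow> a \<in> Sn n \<Longrightarrow> b \<in> Sn n"
  by (induction rule: rtranclp_induct) (auto dest: barrow_Sn)

lemma bruhat_le_Sn: "bruhat_le n a b \<Longrightarrow> a \<in> Sn n \<and> b \<in> Sn n"
  unfolding bruhat_le_def using rtr_Sn by blast

lemma bruhat_le_trans: "bruhat_le n a b \<Longrightarrow> bruhat_le n b c \<Longrightarrow> bruhat_le n a c"
  unfolding bruhat_le_def by auto

lemma bruhat_le_barrow: "barrow n a b \<Longrightarrow> bruhat_le n a b"
  unfolding bruhat_le_def using barrow_Sn by blast

lemma bruhat_le_refl: "a \<in> Sn n \<Longrightarrow> bruhat_le n a a"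
  unfolding bruhat_le_def by simp

lemma bint_up: "a \<in> bint n u v \<Longrightarrow> barrow n a b \<Longrightarrow> bruhat_le n b v \<Longrightarrow> b \<in> bint n u v"
  unfolding bint_def using bruhat_le_trans bruhat_le_barrow by blast

lemma ideal_down:
  assumes D: "strong_hc_decomp n u v I \<theta>" and a: "a \<in> bint n u v" and ab: "barrow n a b" and b: "b \<in> I"
  shows "a \<in> I"
proof -
  obtain z where z: "z \<in> bint n u v" "I = bint n u z" using D unfolding strong_hc_decomp_def by blast
  have "bruhat_le n b z" using b z unfolding bint_def by blast
  then have "bruhat_le n a z" using bruhat_le_trans bruhat_le_barrow ab by blast
  then show ?thesis using a z unfolding bint_def by blast
qed

lemma Ax_sub: "Y \<in> Ax n u v I x \<Longrightarrow> Y' \<subseteq> Y \<Longrightarrow> Y' \<in> Ax n u v I x"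
  unfolding Ax_def bantichain_def by blast

lemma L:
  assumes D: "strong_hc_decomp n u v I \<theta>" and RO: "reflection_order n prec"
    and E: "E1 n u v I prec" and xI: "x \<in> I"
  shows "length ys = m \<Longrightarrow> distinct ys \<Longrightarrow> set ys \<in> Ax n u v I x \<Longrightarrow>
     (\<forall>i<m. bedge n (\<theta> x (set (take i ys))) (l i) (\<theta> x (set (take (Suc i) ys)))) \<Longrightarrow>
     (\<forall>i j. i < j \<and> j < m \<longrightarrow> prec (l i) (l j)) \<Longrightarrow>
     (\<forall>i<m. prec (l i) t) \<Longrightarrow>
     (\<forall>i. 1 \<le> i \<and> i \<le> m \<longrightarrow> \<theta> x (set (take i ys)) \<notin> I) \<Longrightarrow>
     bedge n (\<theta> x (set ys)) t z \<Longrightarrow> z \<in> bint n u v \<Longrightarrow> z \<notin> I \<Longrightarrow>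
     \<exists>y'. y' \<notin> set ys \<and> insert y' (set ys) \<in> Ax n u v I x \<and> \<theta> x (insert y' (set ys)) = z"
proof -
  have cl: "strong_hc_cluster n u v I x (\<theta> x)" using D xI unfolding strong_hc_decomp_def by blast
  have C0: "\<And>Y. Y \<in> Ax n u v I x \<Longrightarrow> \<theta> x Y \<in> bint n u v" using cl unfolding strong_hc_cluster_def by blast
  have C1: "\<theta> x {} = x" using cl unfolding strong_hc_cluster_def by blast
  have C2: "\<And>y. {y} \<in> Ax n u v I x \<Longrightarrow> \<theta> x {y} = y" using cl unfolding strong_hc_cluster_def by blast
  have C4: "\<And>Y Y' w. Y \<in> Ax n u v I x \<Longrightarrow> Y' \<in> Ax n u v I x \<Longrightarrow> card Y = card Y' \<Longrightarrow>
      card Y = card (Y \<inter> Y') + 1 \<Longrightarrow> diamond_in n u v (\<theta> x (Y \<inter> Y')) (\<theta> x Y) (\<theta> x Y') w \<Longrightarrow>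
      bantichain n (Y \<union> Y') \<and> \<theta> x (Y \<union> Y') = w"
    using cl unfolding strong_hc_cluster_def by blast
  have xb: "x \<in> bint n u v" using D xI unfolding strong_hc_decomp_def diamond_closed_def by blast
  have irr: "\<And>t. t \<in> Trans n \<Longrightarrow> \<not> prec t t" using RO by (simp add: reflection_order_def)
  have trn: "\<And>r s t. r \<in> Trans n \<Longrightarrow> s \<in> Trans n \<Longrightarrow> t \<in> Trans n \<Longrightarrow> prec r s \<Longrightarrow> prec s t \<Longrightarrow> prec r t"
    using RO unfolding reflection_order_def by blast
  have bT: "\<And>a t b. bedge n a t b \<Longrightarrow> t \<in> Trans n" unfolding bedge_def by blast
  have E': "\<And>t1 y1 t2 y2. bedge n x t1 y1 \<Longrightarrow> bedge n x t2 y2 \<Longrightarrow> y1 \<in> I \<Longrightarrow> y2 \<in> bint n u v - I \<Longrightarrow> prec t1 t2"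
    using E xI unfolding E1_def by blast
  show "length ys = m \<Longrightarrow> distinct ys \<Longrightarrow> set ys \<in> Ax n u v I x \<Longrightarrow>
     (\<forall>i<m. bedge n (\<theta> x (set (take i ys))) (l i) (\<theta> x (set (take (Suc i) ys)))) \<Longrightarrow>
     (\<forall>i j. i < j \<and> j < m \<longrightarrow> prec (l i) (l j)) \<Longrightarrow>
     (\<forall>i<m. prec (l i) t) \<Longrightarrow>
     (\<forall>i. 1 \<le> i \<and> i \<le> m \<longrightarrow> \<theta> x (set (take i ys)) \<notin> I) \<Longrightarrow>
     bedge n (\<theta> x (set ys)) t z \<Longrightarrow> z \<in> bint n u v \<Longrightarrow> z \<notin> I \<Longrightarrow>
     \<exists>y'. y' \<notin> set ys \<and> insert y' (set ys) \<in> Ax n u v I x \<and> \<theta> x (insert y' (set ys)) = z"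
  proof (induction m arbitrary: ys t z)
    case 0
    then have ys: "ys = []" by simp
    have e: "bedge n x t z" using 0 ys C1 by simp
    have "z \<in> Yx n u v I x" unfolding Yx_def using 0 e bedge_barrow by blast
    then have A: "{z} \<in> Ax n u v I x" unfolding Ax_def bantichain_def by blast
    show ?case using A C2[OF A] ys by (intro exI[of _ z]) simp
  next
    case (Suc m)
    obtain ys0 y where ys: "ys = ys0 @ [y]" using Suc.prems(1) by (metis length_Suc_conv_rev)
    have l0: "length ys0 = m" using Suc.prems(1) ys by simp
    have dys0: "distinct ys0" "y \<notin> set ys0" using Suc.prems(2) ys by auto
    have sys: "set ys = insert y (set ys0)" using ys by simp
    have tk: "\<And>i. i \<le> m \<Longrightarrow> take i ys = take i ys0" using ys l0 by simp
    have A: "set ys \<in> Ax n u v I x" by (rule Suc.prems(3))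
    have A0: "set ys0 \<in> Ax n u v I x" using Ax_sub[OF A] sys by blast
    have em: "bedge n (\<theta> x (set ys0)) (l m) (\<theta> x (set ys))"
      using Suc.prems(4) tk[of m] l0 ys by auto
    have et: "bedge n (\<theta> x (set ys)) t z" by (rule Suc.prems(8))
    have plt: "prec (l m) t" using Suc.prems(6) by simp
    obtain t3 z' where e3: "bedge n (\<theta> x (set ys0)) t3 z'" and z'z: "barrow n z' z"
      and z'ne: "z' \<noteq> \<theta> x (set ys)" and p3: "prec (l m) t3"
      using claimC[OF RO em et plt] by blast
    have lT: "\<And>i. i \<le> m \<Longrightarrow> l i \<in> Trans n"
    proof -
      fix i assume "i \<le> m"
      then show "l i \<in> Trans n" using Suc.prems(4) bT by (meson le_imp_less_Suc)
    qed
    have t3T: "t3 \<in> Trans n" using bT[OF e3] .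
    have b0: "\<theta> x (set ys0) \<in> bint n u v" using C0[OF A0] .
    have b1: "\<theta> x (set ys) \<in> bint n u v" using C0[OF A] .
    have zv: "bruhat_le n z v" using Suc.prems(9) unfolding bint_def by blast
    have z'v: "bruhat_le n z' v" using bruhat_le_trans[OF bruhat_le_barrow[OF z'z] zv] .
    have z'b: "z' \<in> bint n u v" using bint_up[OF b0 bedge_barrow[OF e3] z'v] .
    have z'I: "z' \<notin> I"
    proof
      assume zI: "z' \<in> I"
      show False
      proof (cases m)
        case 0
        then have ys0e: "ys0 = []" using l0 by simp
        have ex: "bedge n x t3 z'" using e3 ys0e C1 by simp
        have ex2: "bedge n x (l 0) (\<theta> x (set ys))" using em ys0e C1 0 by simp
        have nI: "\<theta> x (set ys) \<notin> I" using Suc.prems(7) Suc.prems(1) by (metis le_refl nat_le_linear take_all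
              One_nat_def Suc_le_mono le_add1 plus_1_eq_Suc)
        have "prec t3 (l 0)" using E'[OF ex ex2 zI] nI b1 by blast
        then show False using p3 0 irr[OF t3T] trn[OF t3T lT[of 0] t3T] by simp
      next
        case (Suc m')
        have "1 \<le> m" using Suc by simp
        then have "\<theta> x (set (take m ys)) \<notin> I" using Suc.prems(7) by simp
        then have nI: "\<theta> x (set ys0) \<notin> I" using tk[of m] l0 by simp
        have "\<theta> x (set ys0) \<in> I" using ideal_down[OF D b0 bedge_barrow[OF e3] zI] .
        then show False using nI by simp
      qed
    qed
    have IH: "\<exists>y'. y' \<notin> set ys0 \<and> insert y' (set ys0) \<in> Ax n u v I x \<and> \<theta> x (insert y' (set ys0)) = z'"
    proof (rule Suc.IH[OF l0 dys0(1) A0 _ _ _ _ e3 z'b z'I])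
      show "\<forall>i<m. bedge n (\<theta> x (set (take i ys0))) (l i) (\<theta> x (set (take (Suc i) ys0)))"
        using Suc.prems(4) tk by (metis Suc_leI less_Suc_eq less_imp_le_nat)
      show "\<forall>i j. i < j \<and> j < m \<longrightarrow> prec (l i) (l j)" using Suc.prems(5) by simp
      show "\<forall>i<m. prec (l i) t3"
      proof (intro allI impI)
        fix i assume "i < m"
        then have "prec (l i) (l m)" using Suc.prems(5) by simp
        then show "prec (l i) t3" using trn[OF lT lT t3T _ p3] \<open>i < m\<close> by simp
      qed
      show "\<forall>i. 1 \<le> i \<and> i \<le> m \<longrightarrow> \<theta> x (set (take i ys0)) \<notin> I"
      proof (intro allI impI)
        fix i assume "1 \<le> i \<and> i \<le> m"
        then show "\<theta> x (set (take i ys0)) \<notin> I" using Suc.prems(7)[rule_format, of i] tk[of i] by simp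
      qed
    qed
    then obtain y' where y'0: "y' \<notin> set ys0" and A': "insert y' (set ys0) \<in> Ax n u v I x"
      and th': "\<theta> x (insert y' (set ys0)) = z'" by blast
    have y'y: "y' \<noteq> y" using z'ne th' sys by auto
    have cardY: "card (set ys) = Suc m" using Suc.prems(1,2) by (simp add: distinct_card)
    have card0: "card (set ys0) = m" using dys0 l0 by (simp add: distinct_card)
    have cardY': "card (insert y' (set ys0)) = Suc m" using y'0 card0 by simp
    have int: "set ys \<inter> insert y' (set ys0) = set ys0" using sys y'y dys0(2) y'0 by auto
    have un: "set ys \<union> insert y' (set ys0) = insert y' (set ys)" using sys by auto
    have bz: "z \<in> bint n u v" by (rule Suc.prems(9))
    have bz': "\<theta> x (insert y' (set ys0)) \<in> bint n u v" using C0[OF A'] .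
    have ar1: "barrow n (\<theta> x (set ys0)) (\<theta> x (set ys))" using bedge_barrow[OF em] .
    have ar2: "barrow n (\<theta> x (set ys)) z" using bedge_barrow[OF et] .
    have ar3: "barrow n (\<theta> x (set ys0)) z'" using bedge_barrow[OF e3] .
    have len: "len n (\<theta> x (set ys0)) < len n (\<theta> x (set ys))" "len n (\<theta> x (set ys)) < len n z"
      "len n (\<theta> x (set ys0)) < len n z'" "len n z' < len n z"
      using barrow_len ar1 ar2 ar3 z'z by blast+
    have dia: "diamond_in n u v (\<theta> x (set ys0)) (\<theta> x (set ys)) z' z"
      unfolding diamond_in_def is_diamond_def
      using len z'ne ar1 ar2 ar3 z'z b0 b1 z'b bz by auto
    have "bantichain n (set ys \<union> insert y' (set ys0)) \<and> \<theta> x (set ys \<union> insert y' (set ys0)) = z"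
      by (rule C4[OF A A']) (use cardY cardY' card0 int dia th' in simp_all)
    then have ba: "bantichain n (insert y' (set ys))" and thz: "\<theta> x (insert y' (set ys)) = z"
      using un by simp_all
    have "insert y' (set ys) \<subseteq> Yx n u v I x" using A A' unfolding Ax_def by blast
    then have "insert y' (set ys) \<in> Ax n u v I x" using ba unfolding Ax_def by blast
    moreover have "y' \<notin> set ys" using y'0 y'y sys by simp
    ultimately show ?case using thz by blast
  qed
qed



theorem lemma3p14:
  fixes n :: nat and u v :: "nat \<Rightarrow> nat" and I :: "(nat \<Rightarrow> nat) set"
    and \<theta> :: "(nat \<Rightarrow> nat) \<Rightarrow> (nat \<Rightarrow> nat) set \<Rightarrow> (nat \<Rightarrow> nat)"
    and prec :: "nat \<times> nat \<Rightarrow> nat \<times> nat \<Rightarrow> bool"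
    and xs :: "(nat \<Rightarrow> nat) list" and ts :: "(nat \<times> nat) list"
  assumes "bruhat_le n u v"
    and "strong_hc_decomp n u v I \<theta>"
    and "reflection_order n prec"
    and "E1 n u v I prec"
    and "increasing_path n prec u v xs ts"
  shows "\<exists>x \<in> I. \<exists>ys. distinct ys \<and> set ys \<in> Ax n u v I x \<and>
           (\<exists>pre. xs = pre @ x # map (\<lambda>j. \<theta> x (set (take j ys))) [1..<Suc (length ys)])"
proof -
  note uv = assms(1) and D = assms(2) and RO = assms(3) and E = assms(4)
  define m where "m = length ts"
  have P: "xs \<noteq> []" "hd xs = u" "last xs = v" "length xs = Suc m"
    "\<And>i. i < m \<Longrightarrow> bedge n (xs ! i) (ts ! i) (xs ! Suc i)" "sorted_wrt prec ts"
    using assms(5) unfolding increasing_path_def m_def by auto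
  have x0: "xs ! 0 = u" using P(1,2) by (simp add: hd_conv_nth)
  have xm: "xs ! m = v" using P(1,3,4) by (simp add: last_conv_nth)
  have uS: "u \<in> Sn n" and vS: "v \<in> Sn n" using bruhat_le_Sn[OF uv] by auto
  have reach: "\<And>i j. i \<le> j \<Longrightarrow> j \<le> m \<Longrightarrow> (barrow n)\<^sup>*\<^sup>* (xs ! i) (xs ! j)"
  proof -
    fix i j :: nat assume ij: "i \<le> j" "j \<le> m"
    then show "(barrow n)\<^sup>*\<^sup>* (xs ! i) (xs ! j)"
    proof (induction j)
      case 0 then show ?case by simp
    next
      case (Suc j)
      show ?case
      proof (cases "i = Suc j")
        case True then show ?thesis by simp
      next
        case False
        then have "(barrow n)\<^sup>*\<^sup>* (xs ! i) (xs ! j)" using Suc by simp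
        moreover have "barrow n (xs ! j) (xs ! Suc j)" using P(5)[of j] Suc.prems bedge_barrow by simp
        ultimately show ?thesis by simp
      qed
    qed
  qed
  have inS: "\<And>i. i \<le> m \<Longrightarrow> xs ! i \<in> Sn n"
    using reach[of 0] x0 uS rtr_Sn by (metis le0)
  have inB: "\<And>i. i \<le> m \<Longrightarrow> xs ! i \<in> bint n u v"
  proof -
    fix i assume i: "i \<le> m"
    have "bruhat_le n u (xs ! i)" unfolding bruhat_le_def using reach[of 0 i] i x0 uS by simp
    moreover have "bruhat_le n (xs ! i) v" unfolding bruhat_le_def using reach[of i m] i xm inS by simp
    ultimately show "xs ! i \<in> bint n u v" unfolding bint_def by simp
  qed
  obtain z where z: "z \<in> bint n u v" "I = bint n u z" using D unfolding strong_hc_decomp_def by blast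
  have uI: "u \<in> I" using z uS bruhat_le_refl unfolding bint_def by blast
  define K where "K = {i. i \<le> m \<and> xs ! i \<in> I}"
  have finK: "finite K" unfolding K_def by simp
  have K0: "0 \<in> K" unfolding K_def using x0 uI by simp
  define k where "k = Max K"
  have kK: "k \<in> K" unfolding k_def using finK K0 Max_in by blast
  have km: "k \<le> m" and xkI: "xs ! k \<in> I" using kK unfolding K_def by auto
  have after: "\<And>i. k < i \<Longrightarrow> i \<le> m \<Longrightarrow> xs ! i \<notin> I"
  proof
    fix i assume "k < i" "i \<le> m" "xs ! i \<in> I"
    then have "i \<in> K" unfolding K_def by simp
    then have "i \<le> k" unfolding k_def using finK by simp
    then show False using \<open>k < i\<close> by simp
  qed
  define x where "x = xs ! k"
  have cl: "strong_hc_cluster n u v I x (\<theta> x)" using D xkI unfolding strong_hc_decomp_def x_def by blast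
  have C1: "\<theta> x {} = x" using cl unfolding strong_hc_cluster_def by blast
  have build: "\<And>j. j \<le> m - k \<Longrightarrow> \<exists>ys. length ys = j \<and> distinct ys \<and> set ys \<in> Ax n u v I x \<and>
      (\<forall>i\<le>j. \<theta> x (set (take i ys)) = xs ! (k + i))"
  proof -
    fix j assume "j \<le> m - k"
    then show "\<exists>ys. length ys = j \<and> distinct ys \<and> set ys \<in> Ax n u v I x \<and>
      (\<forall>i\<le>j. \<theta> x (set (take i ys)) = xs ! (k + i))"
    proof (induction j)
      case 0
      have "{} \<in> Ax n u v I x" unfolding Ax_def bantichain_def by simp
      then show ?case using C1 x_def by (intro exI[of _ "[]"]) simp
    next
      case (Suc j)
      then obtain ys where ys: "length ys = j" "distinct ys" "set ys \<in> Ax n u v I x"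
        "\<forall>i\<le>j. \<theta> x (set (take i ys)) = xs ! (k + i)" by auto
      have jm: "k + j < m" using Suc.prems by simp
      have "\<exists>y'. y' \<notin> set ys \<and> insert y' (set ys) \<in> Ax n u v I x \<and> \<theta> x (insert y' (set ys)) = xs ! (k + Suc j)"
      proof (rule L[OF D RO E _ ys(1,2,3), where l="\<lambda>i. ts ! (k + i)" and t="ts ! (k + j)"])
        show "x \<in> I" using xkI x_def by simp
        show "\<forall>i<j. bedge n (\<theta> x (set (take i ys))) (ts ! (k + i)) (\<theta> x (set (take (Suc i) ys)))"
          using ys(4) P(5) jm by simp
        show "\<forall>i ja. i < ja \<and> ja < j \<longrightarrow> prec (ts ! (k + i)) (ts ! (k + ja))"
          using P(6) jm by (simp add: sorted_wrt_iff_nth_less m_def)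
        show "\<forall>i<j. prec (ts ! (k + i)) (ts ! (k + j))"
          using P(6) jm by (simp add: sorted_wrt_iff_nth_less m_def)
        show "\<forall>i. 1 \<le> i \<and> i \<le> j \<longrightarrow> \<theta> x (set (take i ys)) \<notin> I"
          using ys(4) after jm by simp
        show "bedge n (\<theta> x (set ys)) (ts ! (k + j)) (xs ! (k + Suc j))"
          using ys(4)[rule_format, of j] ys(1) P(5)[of "k + j"] jm by simp
        show "xs ! (k + Suc j) \<in> bint n u v" using inB jm by simp
        show "xs ! (k + Suc j) \<notin> I" using after jm by simp
      qed
      then obtain y' where y': "y' \<notin> set ys" "insert y' (set ys) \<in> Ax n u v I x"
        "\<theta> x (insert y' (set ys)) = xs ! (k + Suc j)" by blast
      show ?case
      proof (intro exI[of _ "ys @ [y']"] conjI allI impI)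
        show "length (ys @ [y']) = Suc j" using ys by simp
        show "distinct (ys @ [y'])" using ys y' by simp
        show "set (ys @ [y']) \<in> Ax n u v I x" using y' by simp
        fix i assume "i \<le> Suc j"
        then show "\<theta> x (set (take i (ys @ [y']))) = xs ! (k + i)"
        proof (cases "i \<le> j")
          case True then show ?thesis using ys by simp
        next
          case False
          then have "i = Suc j" using \<open>i \<le> Suc j\<close> by simp
          then show ?thesis using ys y' by simp
        qed
      qed
    qed
  qed
  obtain ys where ys: "length ys = m - k" "distinct ys" "set ys \<in> Ax n u v I x"
      "\<forall>i\<le>m - k. \<theta> x (set (take i ys)) = xs ! (k + i)"
    using build[of "m - k"] by auto
  have eq: "xs = take k xs @ x # map (\<lambda>j. \<theta> x (set (take j ys))) [1..<Suc (length ys)]"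
  proof (rule nth_equalityI)
    show "length xs = length (take k xs @ x # map (\<lambda>j. \<theta> x (set (take j ys))) [1..<Suc (length ys)])"
      using P(4) km ys(1) by auto
    fix p assume p: "p < length xs"
    show "xs ! p = (take k xs @ x # map (\<lambda>j. \<theta> x (set (take j ys))) [1..<Suc (length ys)]) ! p"
    proof (cases "p < k")
      case True then show ?thesis using km P(4) by (simp add: nth_append)
    next
      case False
      then have lk: "length (take k xs) = k" using km P(4) by simp
      show ?thesis
      proof (cases "p = k")
        case True then show ?thesis using lk x_def by (simp add: nth_append)
      next
        case False
        then have pk: "k < p" using \<open>\<not> p < k\<close> by simp
        have pm: "p \<le> m" using p P(4) by simp
        have "(take k xs @ x # map (\<lambda>j. \<theta> x (set (take j ys))) [1..<Suc (length ys)]) ! p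
            = (x # map (\<lambda>j. \<theta> x (set (take j ys))) [1..<Suc (length ys)]) ! (p - k)"
          using lk pk by (simp add: nth_append)
        also have "\<dots> = map (\<lambda>j. \<theta> x (set (take j ys))) [1..<Suc (length ys)] ! (p - k - 1)"
          using pk by (simp add: nth_Cons')
        also have "\<dots> = \<theta> x (set (take (p - k) ys))"
        proof -
          have q: "p - k - 1 < length [1..<Suc (length ys)]" using pk pm ys(1) by (simp del: upt_Suc)
          have r: "[1..<Suc (length ys)] ! (p - k - 1) = p - k"
            using pk pm ys(1) by (simp del: upt_Suc add: nth_upt)
          show ?thesis by (simp only: nth_map[OF q] r)
        qed
        also have "\<dots> = xs ! p" using ys(4) pk pm by simp
        finally show ?thesis by simp
      qed
    qed
  qed
  show ?thesis
    using xkI x_def ys(2,3) eq by blast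
qed

end
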